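(* Let $A$ be a braided group in $\mathcal C$, and for a right crossed module $(Z,\mu_r,\Delta_r)$ over $A$ put $\sigma_{Z/A}:=\mu_r\circ(Z\otimes S)\circ\Delta_r$. Then for all right crossed modules $X,Y$ over $A$, $\Psi^{\mathcal{YD}}_{Y,X}\circ\sigma_{(Y\otimes X)/A}\circ\Psi^{\mathcal{YD}}_{X,Y}=\Psi_{Y,X}\circ(\sigma_{Y/A}\otimes\sigma_{X/A})\circ\Psi_{X,Y}$, where $Y\otimes X$ is the tensor product crossed module and $\Psi^{\mathcal{YD}}$ is the braiding of $\mathcal{YD}(\mathcal C)^A_A$.
   Context: $\mathcal C$ is a braided monoidal category, assumed strict, with tensor product $\otimes$, unit $\underline 1$ and braiding $\Psi_{X,Y}:X\otimes Y\to Y\otimes X$. Inside tensor products of morphisms an object name $X$ stands for ${\rm id}_X$. A braided group is a bialgebra $(A,\mu,\eta,\Delta,\epsilon)$ in $\mathcal C$ (with $\Delta\circ\mu=(\mu\otimes\mu)\circ(A\otimes\Psi_{A,A}\otimes A)\circ(\Delta\otimes\Delta)$ and the unit/counit compatibilities) with antipode $S$: $\mu\circ(S\otimes A)\circ\Delta=\eta\circ\epsilon=\mu\circ(A\otimes S)\circ\Delta$. A right crossed module over $A$ is a right $A$-module $\mu_r:X\otimes A\to X$ and right $A$-comodule $\Delta_r:X\to X\otimes A$ such that $(X\otimes\mu)\circ(\Psi_{A,X}\otimes A)\circ(A\otimes(\Delta_r\circ\mu_r))\circ(\Psi_{X,A}\otimes A)\circ(X\otimes\Delta)=(\mu_r\otimes\mu)\circ(X\otimes\Psi_{A,A}\otimes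 A)\circ(\Delta_r\otimes\Delta)$. The tensor product crossed module $X\otimes Y$ has action $(\mu^X_r\otimes\mu^Y_r)\circ(X\otimes\Psi_{Y,A}\otimes A)\circ(X\otimes Y\otimes\Delta)$ and coaction $(X\otimes Y\otimes\mu)\circ(X\otimes\Psi_{A,Y}\otimes A)\circ(\Delta^X_r\otimes\Delta^Y_r)$. The braiding of $\mathcal{YD}(\mathcal C)^A_A$ is $\Psi^{\mathcal{YD}}_{X,Y}:=(Y\otimes\mu^X_r)\circ(\Psi_{X,Y}\otimes A)\circ(X\otimes\Delta^Y_r)$. *)

theory Defs
  imports Main
begin

text \<open>Every element of
  the morphism type is an arrow with domain Dom f and codomain Cod f;
  Cmp C g f is the composite g after f (meaningful when Cod f = Dom g).
  TO is the tensor product on objects, TM on morphisms, Uo the unit object,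
  Br X Y the braiding X tensor Y to Y tensor X.\<close>

record ('o, 'm) bmc =
  Dom :: "'m \<Rightarrow> 'o"
  Cod :: "'m \<Rightarrow> 'o"
  Cmp :: "'m \<Rightarrow> 'm \<Rightarrow> 'm"
  Idm :: "'o \<Rightarrow> 'm"
  TO  :: "'o \<Rightarrow> 'o \<Rightarrow> 'o"
  TM  :: "'m \<Rightarrow> 'm \<Rightarrow> 'm"
  Uo  :: "'o"
  Br  :: "'o \<Rightarrow> 'o \<Rightarrow> 'm"

definition hom :: "('o, 'm) bmc \<Rightarrow> 'm \<Rightarrow> 'o \<Rightarrow> 'o \<Rightarrow> bool" where
  "hom C f X Y \<longleftrightarrow> Dom C f = X \<and> Cod C f = Y"

definition strict_braided_monoidal :: "('o, 'm) bmc \<Rightarrow> bool" where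
  "strict_braided_monoidal C \<longleftrightarrow>
     \<comment> \<open>category\<close>
     (\<forall>X. hom C (Idm C X) X X) \<and>
     (\<forall>f g. Cod C f = Dom C g \<longrightarrow> hom C (Cmp C g f) (Dom C f) (Cod C g)) \<and>
     (\<forall>f. Cmp C f (Idm C (Dom C f)) = f \<and> Cmp C (Idm C (Cod C f)) f = f) \<and>
     (\<forall>f g h. Cod C f = Dom C g \<longrightarrow> Cod C g = Dom C h \<longrightarrow>
        Cmp C h (Cmp C g f) = Cmp C (Cmp C h g) f) \<and>
     \<comment> \<open>tensor bifunctor\<close>
     (\<forall>f g. hom C (TM C f g) (TO C (Dom C f) (Dom C g)) (TO C (Cod C f) (Cod C g))) \<and>
     (\<forall>X Y. TM C (Idm C X) (Idm C Y) = Idm C (TO C X Y)) \<and>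
     (\<forall>f g f' g'. Cod C f = Dom C g \<longrightarrow> Cod C f' = Dom C g' \<longrightarrow>
        TM C (Cmp C g f) (Cmp C g' f') = Cmp C (TM C g g') (TM C f f')) \<and>
     \<comment> \<open>strictness\<close>
     (\<forall>X Y Z. TO C (TO C X Y) Z = TO C X (TO C Y Z)) \<and>
     (\<forall>X. TO C (Uo C) X = X \<and> TO C X (Uo C) = X) \<and>
     (\<forall>f g h. TM C (TM C f g) h = TM C f (TM C g h)) \<and>
     (\<forall>f. TM C (Idm C (Uo C)) f = f \<and> TM C f (Idm C (Uo C)) = f) \<and>
     \<comment> \<open>braiding: natural isomorphism satisfying the hexagon identities\<close>
     (\<forall>X Y. hom C (Br C X Y) (TO C X Y) (TO C Y X)) \<and>
     (\<forall>X Y. \<exists>g. hom C g (TO C Y X) (TO C X Y) \<and>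
        Cmp C g (Br C X Y) = Idm C (TO C X Y) \<and> Cmp C (Br C X Y) g = Idm C (TO C Y X)) \<and>
     (\<forall>f g. Cmp C (Br C (Cod C f) (Cod C g)) (TM C f g) =
            Cmp C (TM C g f) (Br C (Dom C f) (Dom C g))) \<and>
     (\<forall>X Y Z. Br C X (TO C Y Z) =
        Cmp C (TM C (Idm C Y) (Br C X Z)) (TM C (Br C X Y) (Idm C Z))) \<and>
     (\<forall>X Y Z. Br C (TO C X Y) Z =
        Cmp C (TM C (Br C X Z) (Idm C Y)) (TM C (Idm C X) (Br C Y Z)))"

definition braided_group ::
  "('o, 'm) bmc \<Rightarrow> 'o \<Rightarrow> 'm \<Rightarrow> 'm \<Rightarrow> 'm \<Rightarrow> 'm \<Rightarrow> 'm \<Rightarrow> bool" where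
  "braided_group C A mu eta Delta eps S \<longleftrightarrow>
     strict_braided_monoidal C \<and>
     hom C mu (TO C A A) A \<and> hom C eta (Uo C) A \<and> hom C Delta A (TO C A A) \<and>
     hom C eps A (Uo C) \<and> hom C S A A \<and>
     Cmp C mu (TM C mu (Idm C A)) = Cmp C mu (TM C (Idm C A) mu) \<and>
     Cmp C mu (TM C eta (Idm C A)) = Idm C A \<and>
     Cmp C mu (TM C (Idm C A) eta) = Idm C A \<and>
     Cmp C (TM C Delta (Idm C A)) Delta = Cmp C (TM C (Idm C A) Delta) Delta \<and>
     Cmp C (TM C eps (Idm C A)) Delta = Idm C A \<and>
     Cmp C (TM C (Idm C A) eps) Delta = Idm C A \<and>
     Cmp C Delta mu =
       Cmp C (TM C mu mu)
         (Cmp C (TM C (TM C (Idm C A) (Br C A A)) (Idm C A)) (TM C Delta Delta)) \<and>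
     Cmp C Delta eta = TM C eta eta \<and>
     Cmp C eps mu = TM C eps eps \<and>
     Cmp C eps eta = Idm C (Uo C) \<and>
     Cmp C mu (Cmp C (TM C S (Idm C A)) Delta) = Cmp C eta eps \<and>
     Cmp C mu (Cmp C (TM C (Idm C A) S) Delta) = Cmp C eta eps"

definition right_crossed_module ::
  "('o, 'm) bmc \<Rightarrow> 'o \<Rightarrow> 'm \<Rightarrow> 'm \<Rightarrow> 'm \<Rightarrow> 'm \<Rightarrow> 'o \<Rightarrow> 'm \<Rightarrow> 'm \<Rightarrow> bool" where
  "right_crossed_module C A mu eta Delta eps X mr dr \<longleftrightarrow>
     hom C mr (TO C X A) X \<and> hom C dr X (TO C X A) \<and>
     Cmp C mr (TM C mr (Idm C A)) = Cmp C mr (TM C (Idm C X) mu) \<and>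
     Cmp C mr (TM C (Idm C X) eta) = Idm C X \<and>
     Cmp C (TM C dr (Idm C A)) dr = Cmp C (TM C (Idm C X) Delta) dr \<and>
     Cmp C (TM C (Idm C X) eps) dr = Idm C X \<and>
     Cmp C (TM C (Idm C X) mu)
       (Cmp C (TM C (Br C A X) (Idm C A))
         (Cmp C (TM C (Idm C A) (Cmp C dr mr))
           (Cmp C (TM C (Br C X A) (Idm C A)) (TM C (Idm C X) Delta)))) =
     Cmp C (TM C mr mu)
       (Cmp C (TM C (TM C (Idm C X) (Br C A A)) (Idm C A)) (TM C dr Delta))"

definition tensor_action ::
  "('o, 'm) bmc \<Rightarrow> 'o \<Rightarrow> 'm \<Rightarrow> 'o \<Rightarrow> 'm \<Rightarrow> 'o \<Rightarrow> 'm \<Rightarrow> 'm" where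
  "tensor_action C A Delta X mrX Y mrY =
     Cmp C (TM C mrX mrY)
       (Cmp C (TM C (TM C (Idm C X) (Br C Y A)) (Idm C A))
         (TM C (TM C (Idm C X) (Idm C Y)) Delta))"

definition tensor_coaction ::
  "('o, 'm) bmc \<Rightarrow> 'o \<Rightarrow> 'm \<Rightarrow> 'o \<Rightarrow> 'm \<Rightarrow> 'o \<Rightarrow> 'm \<Rightarrow> 'm" where
  "tensor_coaction C A mu X drX Y drY =
     Cmp C (TM C (TM C (Idm C X) (Idm C Y)) mu)
       (Cmp C (TM C (TM C (Idm C X) (Br C A Y)) (Idm C A)) (TM C drX drY))"

definition yd_braid ::
  "('o, 'm) bmc \<Rightarrow> 'o \<Rightarrow> 'o \<Rightarrow> 'm \<Rightarrow> 'o \<Rightarrow> 'm \<Rightarrow> 'm" where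
  "yd_braid C A X mrX Y drY =
     Cmp C (TM C (Idm C Y) mrX)
       (Cmp C (TM C (Br C X Y) (Idm C A)) (TM C (Idm C X) drY))"

definition sigma_map ::
  "('o, 'm) bmc \<Rightarrow> 'm \<Rightarrow> 'o \<Rightarrow> 'm \<Rightarrow> 'm \<Rightarrow> 'm" where
  "sigma_map C S Z mr dr = Cmp C mr (Cmp C (TM C (Idm C Z) S) dr)"

end

theory Submission imports Defs begin


datatype at = AA | AX | AY
datatype gen = Mu | Eta | Dl | Ep | Sg | Act at | Coa at | Brd at at

fun gdom :: "gen \<Rightarrow> at list" where
  "gdom Mu = [AA,AA]" | "gdom Eta = []" | "gdom Dl = [AA]" | "gdom Ep = [AA]" | "gdom Sg = [AA]"
| "gdom (Act z) = [z,AA]" | "gdom (Coa z) = [z]" | "gdom (Brd a b) = [a,b]"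
fun gcod :: "gen \<Rightarrow> at list" where
  "gcod Mu = [AA]" | "gcod Eta = [AA]" | "gcod Dl = [AA,AA]" | "gcod Ep = []" | "gcod Sg = [AA]"
| "gcod (Act z) = [z]" | "gcod (Coa z) = [z,AA]" | "gcod (Brd a b) = [b,a]"

type_synonym layer = "at list \<times> gen \<times> at list"
fun ldom :: "layer \<Rightarrow> at list" where "ldom (p,g,q) = p @ gdom g @ q"
fun lcod :: "layer \<Rightarrow> at list" where "lcod (p,g,q) = p @ gcod g @ q"
fun wt :: "at list \<Rightarrow> layer list \<Rightarrow> bool" where
  "wt w [] = True" | "wt w (l#D) = (ldom l = w \<and> wt (lcod l) D)"
fun endw :: "at list \<Rightarrow> layer list \<Rightarrow> at list" where
  "endw w [] = w" | "endw w (l#D) = endw (lcod l) D"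
fun whisk :: "at list \<Rightarrow> at list \<Rightarrow> layer \<Rightarrow> layer" where
  "whisk p q (a,g,b) = (p@a, g, b@q)"
fun brdR :: "at list \<Rightarrow> at \<Rightarrow> layer list" where
  "brdR [] b = []"
| "brdR (u#U) b = map (whisk [u] []) (brdR U b) @ [([], Brd u b, U)]"
fun brdL :: "at \<Rightarrow> at list \<Rightarrow> layer list" where
  "brdL b [] = []"
| "brdL b (u#U) = ([], Brd b u, U) # map (whisk [u] []) (brdL b U)"
fun sw :: "layer \<Rightarrow> layer \<Rightarrow> (layer \<times> layer) option" where
  "sw (p1,f,q1) (p2,g,q2) = (if length p1 + length (gcod f) \<le> length p2 then
     Some ((p1 @ gdom f @ drop (length p1 + length (gcod f)) p2, g, q2),
           (p1, f, drop (length p1 + length (gcod f)) p2 @ gcod g @ q2))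
   else if length p2 + length (gdom g) \<le> length p1 then
     Some ((p2, g, drop (length p2 + length (gdom g)) p1 @ gdom f @ q1),
           (p2 @ gcod g @ drop (length p2 + length (gdom g)) p1, f, q1))
   else None)"

lemma wt_append[simp]: "wt w (D1 @ D2) = (wt w D1 \<and> wt (endw w D1) D2)"
  by (induction D1 arbitrary: w) auto
lemma endw_append[simp]: "endw w (D1 @ D2) = endw (endw w D1) D2"
  by (induction D1 arbitrary: w) auto
lemma ldom_whisk[simp]: "ldom (whisk p q l) = p @ ldom l @ q"
  by (cases l) auto
lemma lcod_whisk[simp]: "lcod (whisk p q l) = p @ lcod l @ q"
  by (cases l) auto
lemma wt_whisk: "wt w D \<Longrightarrow> wt (p @ w @ q) (map (whisk p q) D) \<and> endw (p @ w @ q) (map (whisk p q) D) = p @ endw w D @ q"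
  by (induction D arbitrary: w) auto




datatype rname = RMuAssoc | RUnitL | RUnitR | RCoassoc | RCounitL | RCounitR | RBialg | RDelEta
  | REpsMu | REpsEta | RAntipL | RAntipR | RActAssoc at | RActUnit at | RCoaCoassoc at
  | RCoaCounit at | RYD at | RNR gen at | RNL gen at
  | RF | RcuAAR | RcuAAL | RcoAA | RP1 | RP2 | RH1 | RM | RL3 | RL4

fun rl :: "rname \<Rightarrow> at list \<times> layer list \<times> layer list" where
  "rl (RNR g b) = (gdom g @ [b], ([],g,[b]) # brdR (gcod g) b, brdR (gdom g) b @ [([b],g,[])])"
| "rl (RNL g b) = (b # gdom g, ([b],g,[]) # brdL b (gcod g), brdL b (gdom g) @ [([],g,[b])])"
| "rl (RActAssoc AA) = ([],[],[])" | "rl (RActUnit AA) = ([],[],[])"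
| "rl (RCoaCoassoc AA) = ([],[],[])" | "rl (RCoaCounit AA) = ([],[],[])" | "rl (RYD AA) = ([],[],[])"
| "rl RMuAssoc = ([AA,AA,AA], [([],Mu,[AA]), ([],Mu,[])], [([AA],Mu,[]), ([],Mu,[])])"
| "rl RUnitL = ([AA], [([],Eta,[AA]), ([],Mu,[])], [])"
| "rl RUnitR = ([AA], [([AA],Eta,[]), ([],Mu,[])], [])"
| "rl RCoassoc = ([AA], [([],Dl,[]), ([],Dl,[AA])], [([],Dl,[]), ([AA],Dl,[])])"
| "rl RCounitL = ([AA], [([],Dl,[]), ([],Ep,[AA])], [])"
| "rl RCounitR = ([AA], [([],Dl,[]), ([AA],Ep,[])], [])"
| "rl RBialg = ([AA,AA], [([],Mu,[]), ([],Dl,[])], [([],Dl,[AA]), ([AA,AA],Dl,[]), ([AA],(Brd AA AA),[AA]), ([],Mu,[AA,AA]), ([AA],Mu,[])])"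
| "rl RDelEta = ([], [([],Eta,[]), ([],Dl,[])], [([],Eta,[]), ([AA],Eta,[])])"
| "rl REpsMu = ([AA,AA], [([],Mu,[]), ([],Ep,[])], [([AA],Ep,[]), ([],Ep,[])])"
| "rl REpsEta = ([], [([],Eta,[]), ([],Ep,[])], [])"
| "rl RAntipL = ([AA], [([],Dl,[]), ([],Sg,[AA]), ([],Mu,[])], [([],Ep,[]), ([],Eta,[])])"
| "rl RAntipR = ([AA], [([],Dl,[]), ([AA],Sg,[]), ([],Mu,[])], [([],Ep,[]), ([],Eta,[])])"
| "rl (RActAssoc AX) = ([AX,AA,AA], [([],(Act AX),[AA]), ([],(Act AX),[])], [([AX],Mu,[]), ([],(Act AX),[])])"
| "rl (RActUnit AX) = ([AX], [([AX],Eta,[]), ([],(Act AX),[])], [])"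
| "rl (RCoaCoassoc AX) = ([AX], [([],(Coa AX),[]), ([],(Coa AX),[AA])], [([],(Coa AX),[]), ([AX],Dl,[])])"
| "rl (RCoaCounit AX) = ([AX], [([],(Coa AX),[]), ([AX],Ep,[])], [])"
| "rl (RYD AX) = ([AX,AA], [([AX],Dl,[]), ([],(Brd AX AA),[AA]), ([AA],(Act AX),[]), ([AA],(Coa AX),[]), ([],(Brd AA AX),[AA]), ([AX],Mu,[])], [([],(Coa AX),[AA]), ([AX,AA],Dl,[]), ([AX],(Brd AA AA),[AA]), ([],(Act AX),[AA,AA]), ([AX],Mu,[])])"
| "rl (RActAssoc AY) = ([AY,AA,AA], [([],(Act AY),[AA]), ([],(Act AY),[])], [([AY],Mu,[]), ([],(Act AY),[])])"
| "rl (RActUnit AY) = ([AY], [([AY],Eta,[]), ([],(Act AY),[])], [])"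
| "rl (RCoaCoassoc AY) = ([AY], [([],(Coa AY),[]), ([],(Coa AY),[AA])], [([],(Coa AY),[]), ([AY],Dl,[])])"
| "rl (RCoaCounit AY) = ([AY], [([],(Coa AY),[]), ([AY],Ep,[])], [])"
| "rl (RYD AY) = ([AY,AA], [([AY],Dl,[]), ([],(Brd AY AA),[AA]), ([AA],(Act AY),[]), ([AA],(Coa AY),[]), ([],(Brd AA AY),[AA]), ([AY],Mu,[])], [([],(Coa AY),[AA]), ([AY,AA],Dl,[]), ([AY],(Brd AA AA),[AA]), ([],(Act AY),[AA,AA]), ([AY],Mu,[])])"
| "rl RF = ([AA], [([],Dl,[]), ([AA],Sg,[]), ([AA],Dl,[]), ([],(Brd AA AA),[AA]), ([AA],Mu,[])], [([],Sg,[]), ([AA],Eta,[])])"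
| "rl RcuAAR = ([AA,AA], [([],Dl,[AA]), ([AA,AA],Dl,[]), ([AA],(Brd AA AA),[AA]), ([AA,AA,AA],Ep,[]), ([AA,AA],Ep,[])], [])"
| "rl RcuAAL = ([AA,AA], [([],Dl,[AA]), ([AA,AA],Dl,[]), ([AA],(Brd AA AA),[AA]), ([AA],Ep,[AA,AA]), ([],Ep,[AA,AA])], [])"
| "rl RcoAA = ([AA,AA], [([],Dl,[AA]), ([AA,AA],Dl,[]), ([AA],(Brd AA AA),[AA]), ([],Dl,[AA,AA,AA]), ([AA,AA],Dl,[AA,AA]), ([AA],(Brd AA AA),[AA,AA,AA])], [([],Dl,[AA]), ([AA,AA],Dl,[]), ([AA],(Brd AA AA),[AA]), ([AA,AA],Dl,[AA]), ([AA,AA,AA,AA],Dl,[]), ([AA,AA,AA],(Brd AA AA),[AA])])"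
| "rl RP1 = ([AA,AA], [([],Dl,[AA]), ([AA,AA],Dl,[]), ([AA],(Brd AA AA),[AA]), ([],Mu,[AA,AA]), ([AA],(Brd AA AA),[]), ([AA],Sg,[AA]), ([AA,AA],Sg,[]), ([AA],Mu,[]), ([],Mu,[])], [([AA],Ep,[]), ([],Ep,[]), ([],Eta,[])])"
| "rl RP2 = ([AA,AA], [([],Dl,[AA]), ([AA,AA],Dl,[]), ([AA],(Brd AA AA),[AA]), ([],Mu,[AA,AA]), ([],Sg,[AA,AA]), ([AA],Mu,[]), ([],Mu,[])], [([AA],Ep,[]), ([],Ep,[]), ([],Eta,[])])"
| "rl RH1 = ([AA,AA], [([],Mu,[]), ([],Sg,[])], [([],(Brd AA AA),[]), ([],Sg,[AA]), ([AA],Sg,[]), ([],Mu,[])])"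
| "rl RM = ([AY,AX,AA,AA], [([AY,AX],Mu,[]), ([AY,AX],Dl,[]), ([AY],(Brd AX AA),[AA]), ([],(Act AY),[AX,AA]), ([AY],(Act AX),[])], [([AY,AX],Dl,[AA]), ([AY],(Brd AX AA),[AA,AA]), ([],(Act AY),[AX,AA,AA]), ([AY],(Act AX),[AA]), ([AY,AX],Dl,[]), ([AY],(Brd AX AA),[AA]), ([],(Act AY),[AX,AA]), ([AY],(Act AX),[])])"
| "rl RL3 = ([AY,AX], [([AY],(Coa AX),[]), ([AY,AX],Sg,[]), ([AY,AX],Dl,[]), ([AY],(Brd AX AA),[AA]), ([],(Act AY),[AX,AA]), ([AY],(Act AX),[]), ([AY],(Coa AX),[]), ([],(Brd AY AX),[AA]), ([AX],(Act AY),[])], [([AY],(Coa AX),[]), ([AY,AX],Sg,[]), ([AY],(Act AX),[]), ([],(Brd AY AX),[])])"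
| "rl RL4 = ([AX,AY], [([AX],(Coa AY),[]), ([],(Brd AX AY),[AA]), ([AY],(Act AX),[]), ([],(Coa AY),[AX]), ([AY,AA],(Coa AX),[]), ([AY],(Brd AA AX),[AA]), ([AY,AX],Mu,[]), ([AY,AX],Sg,[]), ([AY,AX],Dl,[]), ([AY],(Brd AX AA),[AA]), ([],(Act AY),[AX,AA]), ([AY],(Act AX),[])], [([],(Brd AX AY),[]), ([],(Coa AY),[AX]), ([AY],Sg,[AX]), ([],(Act AY),[AX]), ([AY],(Coa AX),[]), ([AY,AX],Sg,[]), ([AY,AX],Dl,[]), ([AY],(Brd AX AA),[AA]), ([],(Act AY),[AX,AA]), ([AY],(Act AX),[])])"

datatype step = Sw nat | Rw rname nat nat bool

fun stepf :: "at list \<Rightarrow> step \<Rightarrow> layer list \<Rightarrow> layer list option" where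
  "stepf w (Sw i) D = (case drop i D of
      l1 # l2 # R \<Rightarrow> (case sw l1 l2 of Some (a,b) \<Rightarrow> Some (take i D @ a # b # R) | None \<Rightarrow> None)
    | _ \<Rightarrow> None)"
| "stepf w (Rw n i k d) D = (case rl n of (u,l,r) \<Rightarrow>
      (let src = (if d then l else r); tgt = (if d then r else l); v = endw w (take i D);
           p = take k v; q = drop (k + length u) v in
       if v = p @ u @ q \<and> take (length src) (drop i D) = map (whisk p q) src
       then Some (take i D @ map (whisk p q) tgt @ drop (i + length src) D) else None))"

fun run :: "at list \<Rightarrow> step list \<Rightarrow> layer list \<Rightarrow> layer list option" where
  "run w [] D = Some D"
| "run w (s # ss) D = (case stepf w s D of None \<Rightarrow> None | Some D' \<Rightarrow> run w ss D')"

fun sname :: "step \<Rightarrow> rname list" where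
  "sname (Sw i) = []" | "sname (Rw n i k d) = [n]"

locale hs =
  fixes C :: "('o, 'm) bmc"
    and A X Y :: 'o
    and mu eta Delta eps S mrX drX mrY drY :: 'm
  assumes bg: "braided_group C A mu eta Delta eps S"
    and cmX: "right_crossed_module C A mu eta Delta eps X mrX drX"
    and cmY: "right_crossed_module C A mu eta Delta eps Y mrY drY"
begin

lemma sbm: "strict_braided_monoidal C" using bg unfolding braided_group_def by blast

lemma idm_hom[simp]: "Dom C (Idm C Z) = Z" "Cod C (Idm C Z) = Z"
  using sbm unfolding strict_braided_monoidal_def hom_def by auto
lemma cmp_hom[simp]: "Cod C f = Dom C g \<Longrightarrow> Dom C (Cmp C g f) = Dom C f"
   "Cod C f = Dom C g \<Longrightarrow> Cod C (Cmp C g f) = Cod C g"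
  using sbm unfolding strict_braided_monoidal_def hom_def by auto
lemma idr0: "Cmp C f (Idm C (Dom C f)) = f" and idl0: "Cmp C (Idm C (Cod C f)) f = f"
  using sbm unfolding strict_braided_monoidal_def hom_def by auto
lemma idr: "Dom C f = Z \<Longrightarrow> Cmp C f (Idm C Z) = f" using idr0 by auto
lemma idl: "Cod C f = Z \<Longrightarrow> Cmp C (Idm C Z) f = f" using idl0 by auto
lemma assoc: "Cod C f = Dom C g \<Longrightarrow> Cod C g = Dom C h \<Longrightarrow> Cmp C h (Cmp C g f) = Cmp C (Cmp C h g) f"
  using sbm unfolding strict_braided_monoidal_def hom_def by auto
lemma tm_hom[simp]: "Dom C (TM C f g) = TO C (Dom C f) (Dom C g)" "Cod C (TM C f g) = TO C (Cod C f) (Cod C g)"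
  using sbm unfolding strict_braided_monoidal_def hom_def by auto
lemma tm_id: "TM C (Idm C Z) (Idm C W) = Idm C (TO C Z W)"
  using sbm unfolding strict_braided_monoidal_def hom_def by auto
lemma tm_cmp: "Cod C f = Dom C g \<Longrightarrow> Cod C f' = Dom C g' \<Longrightarrow>
        TM C (Cmp C g f) (Cmp C g' f') = Cmp C (TM C g g') (TM C f f')"
  using sbm unfolding strict_braided_monoidal_def hom_def by auto
lemma to_assoc[simp]: "TO C (TO C Z W) V = TO C Z (TO C W V)"
  using sbm unfolding strict_braided_monoidal_def hom_def by auto
lemma to_unit[simp]: "TO C (Uo C) Z = Z" "TO C Z (Uo C) = Z"
  using sbm unfolding strict_braided_monoidal_def hom_def by auto
lemma tm_assoc[simp]: "TM C (TM C f g) h = TM C f (TM C g h)"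
  using sbm unfolding strict_braided_monoidal_def hom_def by auto
lemma tm_unit[simp]: "TM C (Idm C (Uo C)) f = f" "TM C f (Idm C (Uo C)) = f"
  using sbm unfolding strict_braided_monoidal_def hom_def by auto
lemma br_hom[simp]: "Dom C (Br C Z W) = TO C Z W" "Cod C (Br C Z W) = TO C W Z"
  using sbm unfolding strict_braided_monoidal_def hom_def by auto
lemma br_inv: "\<exists>g. hom C g (TO C W Z) (TO C Z W) \<and>
        Cmp C g (Br C Z W) = Idm C (TO C Z W) \<and> Cmp C (Br C Z W) g = Idm C (TO C W Z)"
  using sbm unfolding strict_braided_monoidal_def by auto
lemma br_nat: "Cmp C (Br C (Cod C f) (Cod C g)) (TM C f g) =
            Cmp C (TM C g f) (Br C (Dom C f) (Dom C g))"
  using sbm unfolding strict_braided_monoidal_def hom_def by auto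
lemma hex1: "Br C Z (TO C W V) = Cmp C (TM C (Idm C W) (Br C Z V)) (TM C (Br C Z W) (Idm C V))"
  using sbm unfolding strict_braided_monoidal_def hom_def by auto
lemma hex2: "Br C (TO C Z W) V = Cmp C (TM C (Br C Z V) (Idm C W)) (TM C (Idm C Z) (Br C W V))"
  using sbm unfolding strict_braided_monoidal_def hom_def by auto

lemma br_unit: "Br C (Uo C) Z = Idm C Z"
proof -
  have e: "Br C (Uo C) Z = Cmp C (Br C (Uo C) Z) (Br C (Uo C) Z)"
    using hex2[of "Uo C" "Uo C" Z] by simp
  obtain g where g: "hom C g Z Z" "Cmp C g (Br C (Uo C) Z) = Idm C Z"
    using br_inv[where Z="Uo C" and W=Z] by auto
  have "Idm C Z = Cmp C g (Cmp C (Br C (Uo C) Z) (Br C (Uo C) Z))" using e g by simp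
  also have "\<dots> = Cmp C (Cmp C g (Br C (Uo C) Z)) (Br C (Uo C) Z)"
    using g by (simp add: assoc hom_def)
  also have "\<dots> = Br C (Uo C) Z" using g by (simp add: idl)
  finally show ?thesis by simp
qed


lemma br_unit2: "Br C Z (Uo C) = Idm C Z"
proof -
  have e: "Br C Z (Uo C) = Cmp C (Br C Z (Uo C)) (Br C Z (Uo C))"
    using hex1[of Z "Uo C" "Uo C"] by simp
  obtain g where g: "hom C g Z Z" "Cmp C g (Br C Z (Uo C)) = Idm C Z"
    using br_inv[where Z=Z and W="Uo C"] by auto
  have "Idm C Z = Cmp C g (Cmp C (Br C Z (Uo C)) (Br C Z (Uo C)))" using e g by simp
  also have "\<dots> = Cmp C (Cmp C g (Br C Z (Uo C))) (Br C Z (Uo C))"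
    using g by (simp add: assoc hom_def)
  also have "\<dots> = Br C Z (Uo C)" using g by (simp add: idl)
  finally show ?thesis by simp
qed

lemma gh: "hom C mu (TO C A A) A" "hom C eta (Uo C) A" "hom C Delta A (TO C A A)"
  "hom C eps A (Uo C)" "hom C S A A"
  "hom C mrX (TO C X A) X" "hom C drX X (TO C X A)"
  "hom C mrY (TO C Y A) Y" "hom C drY Y (TO C Y A)"
  using bg cmX cmY unfolding braided_group_def right_crossed_module_def by auto

fun oa :: "at \<Rightarrow> 'o" where "oa AA = A" | "oa AX = X" | "oa AY = Y"
fun ob :: "at list \<Rightarrow> 'o" where "ob [] = Uo C" | "ob (a#as) = TO C (oa a) (ob as)"
fun gm :: "gen \<Rightarrow> 'm" where
  "gm Mu = mu" | "gm Eta = eta" | "gm Dl = Delta" | "gm Ep = eps" | "gm Sg = S"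
| "gm (Act AA) = mu" | "gm (Act AX) = mrX" | "gm (Act AY) = mrY"
| "gm (Coa AA) = Delta" | "gm (Coa AX) = drX" | "gm (Coa AY) = drY"
| "gm (Brd a b) = Br C (oa a) (oa b)"
fun lm :: "layer \<Rightarrow> 'm" where
  "lm (p,g,q) = TM C (Idm C (ob p)) (TM C (gm g) (Idm C (ob q)))"
fun dm :: "at list \<Rightarrow> layer list \<Rightarrow> 'm" where
  "dm w [] = Idm C (ob w)" | "dm w (l#D) = Cmp C (dm (lcod l) D) (lm l)"
definition valid :: "at list \<times> layer list \<times> layer list \<Rightarrow> bool" where
  "valid r = (case r of (u,l,rr) \<Rightarrow> wt u l \<and> wt u rr \<and> endw u l = endw u rr \<and> dm u l = dm u rr)"

lemma ob_append[simp]: "ob (xs @ ys) = TO C (ob xs) (ob ys)"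
  by (induction xs) auto

lemma gm_hom[simp]: "Dom C (gm g) = ob (gdom g)" "Cod C (gm g) = ob (gcod g)"
  using gh by (cases g rule: gm.cases; auto simp: hom_def)+

lemma lm_hom[simp]: "Dom C (lm l) = ob (ldom l)" "Cod C (lm l) = ob (lcod l)"
  by (cases l; auto)+

lemma dm_hom: "wt w D \<Longrightarrow> Dom C (dm w D) = ob w \<and> Cod C (dm w D) = ob (endw w D)"
  by (induction D arbitrary: w) auto

lemma dm_append: "wt w (D1 @ D2) \<Longrightarrow> dm w (D1 @ D2) = Cmp C (dm (endw w D1) D2) (dm w D1)"
proof (induction D1 arbitrary: w)
  case Nil
  then show ?case using dm_hom[of w D2] by (simp add: idr)
next
  case (Cons l D1)
  then have wt1: "wt (lcod l) (D1 @ D2)" and d: "ldom l = w" by auto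
  have h1: "Dom C (dm (lcod l) D1) = ob (lcod l)" "Cod C (dm (lcod l) D1) = ob (endw (lcod l) D1)"
    using dm_hom[of "lcod l" D1] wt1 by auto
  have h2: "Dom C (dm (endw (lcod l) D1) D2) = ob (endw (lcod l) D1)"
    using dm_hom[of "endw (lcod l) D1" D2] wt1 by auto
  show ?case using Cons.IH[OF wt1] h1 h2 by (simp add: assoc)
qed


lemma lm_whisk: "lm (whisk p q l) = TM C (Idm C (ob p)) (TM C (lm l) (Idm C (ob q)))"
  by (cases l) (simp add: tm_id[symmetric])

lemma tm_cmp2: "Cod C f = Dom C g \<Longrightarrow> Cod C f' = Dom C g' \<Longrightarrow>
        Cmp C (TM C g g') (TM C f f') = TM C (Cmp C g f) (Cmp C g' f')"
  by (simp add: tm_cmp)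

lemma dm_whisk: "wt w D \<Longrightarrow> dm (p @ w @ q) (map (whisk p q) D) = TM C (Idm C (ob p)) (TM C (dm w D) (Idm C (ob q)))"
proof (induction D arbitrary: w)
  case Nil
  then show ?case by (simp add: tm_id[symmetric])
next
  case (Cons l D)
  then have wt1: "wt (lcod l) D" and d: "ldom l = w" by auto
  have h: "Dom C (dm (lcod l) D) = ob (lcod l)" using dm_hom[OF wt1] by auto
  have "dm (p @ w @ q) (map (whisk p q) (l # D)) =
     Cmp C (TM C (Idm C (ob p)) (TM C (dm (lcod l) D) (Idm C (ob q)))) (TM C (Idm C (ob p)) (TM C (lm l) (Idm C (ob q))))"
    using Cons.IH[OF wt1] by (simp add: lm_whisk)
  also have "\<dots> = TM C (Idm C (ob p)) (TM C (dm w (l # D)) (Idm C (ob q)))"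
    using h by (simp add: tm_cmp2 idl)
  finally show ?case .
qed


lemma dm2: "wt v [l1,l2] \<Longrightarrow> dm v [l1,l2] = Cmp C (lm l2) (lm l1)"
  by (cases l1; cases l2; simp add: idl)

lemma sw_sound:
  assumes s: "sw l1 l2 = Some (a, b)" and w: "wt v [l1,l2]"
  shows "wt v [a,b] \<and> endw v [a,b] = endw v [l1,l2] \<and> dm v [a,b] = dm v [l1,l2]"
proof -
  obtain p1 f q1 where l1: "l1 = (p1,f,q1)" by (cases l1) auto
  obtain p2 g q2 where l2: "l2 = (p2,g,q2)" by (cases l2) auto
  have v: "v = p1 @ gdom f @ q1" and e: "p1 @ gcod f @ q1 = p2 @ gdom g @ q2"
    using w l1 l2 by auto
  show ?thesis
  proof (cases "length p1 + length (gcod f) \<le> length p2")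
    case True
    obtain m where m: "p2 = p1 @ gcod f @ m" "q1 = m @ gdom g @ q2"
    proof -
      from e have "(p1 @ gcod f) @ q1 = p2 @ (gdom g @ q2)" by simp
      then obtain us where "(p1 @ gcod f = p2 @ us \<and> us @ q1 = gdom g @ q2) \<or> ((p1 @ gcod f) @ us = p2 \<and> q1 = us @ gdom g @ q2)"
        unfolding append_eq_append_conv2 by blast
      then show ?thesis
      proof
        assume h: "p1 @ gcod f = p2 @ us \<and> us @ q1 = gdom g @ q2"
        then have "us = []" using True by (metis add_le_same_cancel1 le_zero_eq length_0_conv length_append)
        then show ?thesis using h that[of "[]"] by simp
      next
        assume h: "(p1 @ gcod f) @ us = p2 \<and> q1 = us @ gdom g @ q2"
        then show ?thesis using that[of us] by simp
      qed
    qed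
    have dr: "drop (length p1 + length (gcod f)) p2 = m" using m by simp
    have sa: "a = (p1 @ gdom f @ m, g, q2)" "b = (p1, f, m @ gcod g @ q2)"
      using s True l1 l2 dr by auto
    have "Cmp C (lm b) (lm a) = Cmp C (lm l2) (lm l1)"
      unfolding sa l1 l2 m by (simp add: tm_id[symmetric] tm_cmp2 idl idr)
    then show ?thesis using sa l1 l2 m v by (simp add: idl)
  next
    case False
    then have F: "length p2 + length (gdom g) \<le> length p1"
      using s l1 l2 by (auto split: if_splits)
    obtain m where m: "p1 = p2 @ gdom g @ m" "q2 = m @ gcod f @ q1"
    proof -
      from e have "(p2 @ gdom g) @ q2 = p1 @ (gcod f @ q1)" by simp
      then obtain us where "(p2 @ gdom g = p1 @ us \<and> us @ q2 = gcod f @ q1) \<or> ((p2 @ gdom g) @ us = p1 \<and> q2 = us @ gcod f @ q1)"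
        unfolding append_eq_append_conv2 by blast
      then show ?thesis
      proof
        assume h: "p2 @ gdom g = p1 @ us \<and> us @ q2 = gcod f @ q1"
        then have "us = []" using F by (metis add_le_same_cancel1 le_zero_eq length_0_conv length_append)
        then show ?thesis using h that[of "[]"] by simp
      next
        assume h: "(p2 @ gdom g) @ us = p1 \<and> q2 = us @ gcod f @ q1"
        then show ?thesis using that[of us] by simp
      qed
    qed
    have dr: "drop (length p2 + length (gdom g)) p1 = m" using m by simp
    have sa: "a = (p2, g, m @ gdom f @ q1)" "b = (p2 @ gcod g @ m, f, q1)"
      using s False F l1 l2 dr by auto
    have "Cmp C (lm b) (lm a) = Cmp C (lm l2) (lm l1)"
      unfolding sa l1 l2 m by (simp add: tm_id[symmetric] tm_cmp2 idl idr)
    then show ?thesis using sa l1 l2 m v by (simp add: idl)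
  qed
qed



lemma valid_sym: "valid (u,l,r) \<Longrightarrow> valid (u,r,l)"
  unfolding valid_def by auto

lemma repl:
  assumes w: "wt w (L @ M @ R)" and w2: "wt (endw w L) M'"
    and e: "endw (endw w L) M' = endw (endw w L) M" and d: "dm (endw w L) M' = dm (endw w L) M"
  shows "wt w (L @ M' @ R) \<and> endw w (L @ M' @ R) = endw w (L @ M @ R) \<and> dm w (L @ M' @ R) = dm w (L @ M @ R)"
proof -
  have w1: "wt w L" "wt (endw w L) M" "wt (endw (endw w L) M) R" using w by auto
  have 1: "wt w (L @ M' @ R)" using w1 w2 e by simp
  have h: "Dom C (dm (endw w L) M') = ob (endw w L)" "Cod C (dm w L) = ob (endw w L)"
     "Cod C (dm (endw w L) M') = ob (endw (endw w L) M')" "Dom C (dm (endw (endw w L) M') R) = ob (endw (endw w L) M')"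
    using dm_hom[OF w1(1)] dm_hom[OF w2] dm_hom[of "endw (endw w L) M'" R] 1 by auto
  have "dm w (L @ M' @ R) = Cmp C (dm (endw (endw w L) M') R) (Cmp C (dm (endw w L) M') (dm w L))"
    using 1 h by (simp add: dm_append[of w L "M' @ R"] dm_append[of "endw w L" M' R] assoc)
  also have "\<dots> = Cmp C (dm (endw (endw w L) M) R) (Cmp C (dm (endw w L) M) (dm w L))"
    using e d by simp
  also have "\<dots> = dm w (L @ M @ R)"
  proof -
    have h: "Dom C (dm (endw w L) M) = ob (endw w L)" "Cod C (dm w L) = ob (endw w L)"
     "Cod C (dm (endw w L) M) = ob (endw (endw w L) M)" "Dom C (dm (endw (endw w L) M) R) = ob (endw (endw w L) M)"
      using dm_hom[OF w1(1)] dm_hom[OF w1(2)] dm_hom[OF w1(3)] by auto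
    show ?thesis using w h by (simp add: dm_append[of w L "M @ R"] dm_append[of "endw w L" M R] assoc)
  qed
  finally show ?thesis using 1 e by simp
qed

lemma stepf_sound:
  assumes w: "wt w D" and s: "stepf w st D = Some D'" and v: "\<forall>n\<in>set (sname st). valid (rl n)"
  shows "wt w D' \<and> endw w D' = endw w D \<and> dm w D' = dm w D"
proof (cases st)
  case (Sw i)
  obtain l1 l2 R where dr: "drop i D = l1 # l2 # R"
    using s Sw by (auto split: list.splits)
  obtain a b where ab: "sw l1 l2 = Some (a,b)" and D': "D' = take i D @ a # b # R"
    using s Sw dr by (auto split: option.splits)
  have D: "D = take i D @ [l1,l2] @ R" using dr by (metis append_Cons append_Nil append_take_drop_id)
  have wD: "wt w (take i D @ [l1,l2] @ R)" using w D by metis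
  have w2: "wt (endw w (take i D)) [l1,l2]" using wD by simp
  have ss: "wt (endw w (take i D)) [a,b] \<and> endw (endw w (take i D)) [a,b] = endw (endw w (take i D)) [l1,l2]
       \<and> dm (endw w (take i D)) [a,b] = dm (endw w (take i D)) [l1,l2]"
    by (rule sw_sound[OF ab w2])
  have rr: "wt w (take i D @ [a,b] @ R) \<and> endw w (take i D @ [a,b] @ R) = endw w (take i D @ [l1,l2] @ R)
      \<and> dm w (take i D @ [a,b] @ R) = dm w (take i D @ [l1,l2] @ R)"
    by (rule repl[OF wD]) (use ss in auto)
  have eq1: "take i D @ [a,b] @ R = D'" using D' by simp
  have eq2: "take i D @ [l1,l2] @ R = D" using D by simp
  show ?thesis using rr unfolding eq1 eq2 .
next
  case (Rw n i k d)
  obtain u l r where r: "rl n = (u,l,r)" by (cases "rl n") auto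
  have vr: "valid (u,l,r)" using v Rw r by simp
  define src where "src = (if d then l else r)"
  define tgt where "tgt = (if d then r else l)"
  define v0 where "v0 = endw w (take i D)"
  define p where "p = take k v0"
  define q where "q = drop (k + length u) v0"
  have c: "v0 = p @ u @ q" "take (length src) (drop i D) = map (whisk p q) src"
   and D': "D' = take i D @ map (whisk p q) tgt @ drop (i + length src) D"
  proof -
    have "stepf w st D = (if v0 = p @ u @ q \<and> take (length src) (drop i D) = map (whisk p q) src
       then Some (take i D @ map (whisk p q) tgt @ drop (i + length src) D) else None)"
      using Rw r by (simp add: src_def tgt_def v0_def p_def q_def Let_def)
    then show "v0 = p @ u @ q" "take (length src) (drop i D) = map (whisk p q) src"
      "D' = take i D @ map (whisk p q) tgt @ drop (i + length src) D"
      using s by (auto split: if_splits)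
  qed
  have vst: "wt u src" "wt u tgt" "endw u tgt = endw u src" "dm u tgt = dm u src"
    using vr unfolding valid_def src_def tgt_def by auto
  have D: "D = take i D @ map (whisk p q) src @ drop (i + length src) D"
    using c(2) by (metis append_take_drop_id drop_drop add.commute)
  have wD: "wt w (take i D @ map (whisk p q) src @ drop (i + length src) D)" using w D by metis
  have w2: "wt (endw w (take i D)) (map (whisk p q) tgt)"
    using wt_whisk[OF vst(2), of p q] c(1) v0_def by simp
  have e2: "endw (endw w (take i D)) (map (whisk p q) tgt) = endw (endw w (take i D)) (map (whisk p q) src)"
    using wt_whisk[OF vst(2), of p q] wt_whisk[OF vst(1), of p q] c(1) v0_def vst(3) by simp
  have d2: "dm (endw w (take i D)) (map (whisk p q) tgt) = dm (endw w (take i D)) (map (whisk p q) src)"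
    using dm_whisk[OF vst(2), of p q] dm_whisk[OF vst(1), of p q] c(1) v0_def vst(4) by simp
  have eq1: "take i D @ map (whisk p q) tgt @ drop (i + length src) D = D'" using D' by simp
  have eq2: "take i D @ map (whisk p q) src @ drop (i + length src) D = D" using D by simp
  show ?thesis using repl[OF wD w2 e2 d2] unfolding eq1 eq2 .
qed

lemma run_sound:
  "wt w D \<Longrightarrow> run w ss D = Some D' \<Longrightarrow> \<forall>n\<in>set (concat (map sname ss)). valid (rl n) \<Longrightarrow>
   wt w D' \<and> endw w D' = endw w D \<and> dm w D' = dm w D"
proof (induction ss arbitrary: D)
  case Nil
  then show ?case by simp
next
  case (Cons s ss)
  then obtain D1 where s1: "stepf w s D = Some D1" and r1: "run w ss D1 = Some D'"
    by (auto split: option.splits)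
  have a: "wt w D1 \<and> endw w D1 = endw w D \<and> dm w D1 = dm w D"
    using stepf_sound[OF Cons.prems(1) s1] Cons.prems(3) by simp
  show ?case using Cons.IH[OF _ r1] a Cons.prems(3) by simp
qed

lemma valid_by_run:
  "wt u l \<Longrightarrow> run u ss l = Some r \<Longrightarrow> \<forall>n\<in>set (concat (map sname ss)). valid (rl n) \<Longrightarrow> valid (u,l,r)"
  using run_sound[of u l ss r] unfolding valid_def by auto



lemma tm_split1: "TM C f g = Cmp C (TM C (Idm C (Cod C f)) g) (TM C f (Idm C (Dom C g)))"
  using tm_cmp[of f "Idm C (Cod C f)" "Idm C (Dom C g)" g] by (simp add: idl0 idr0)
lemma tm_split2: "TM C f g = Cmp C (TM C f (Idm C (Cod C g))) (TM C (Idm C (Dom C f)) g)"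
  using tm_cmp[of "Idm C (Dom C f)" f g "Idm C (Cod C g)"] by (simp add: idl0 idr0)
lemma assocR: "Cod C f = Dom C g \<Longrightarrow> Cod C g = Dom C h \<Longrightarrow> Cmp C (Cmp C h g) f = Cmp C h (Cmp C g f)"
  by (simp add: assoc)
lemma tm_idid: "TM C (Idm C Z) (TM C (Idm C W) f) = TM C (Idm C (TO C Z W)) f"
  by (simp add: tm_id[symmetric])
lemma tm_idl_cmp: "Cod C f = Dom C g \<Longrightarrow> TM C (Idm C Z) (Cmp C g f) = Cmp C (TM C (Idm C Z) g) (TM C (Idm C Z) f)"
  using tm_cmp[of "Idm C Z" "Idm C Z" f g] by (simp add: idl)

lemmas nsimps = assocR idl idr tm_id tm_idid

lemma ax: "Cmp C mu (TM C mu (Idm C A)) = Cmp C mu (TM C (Idm C A) mu)"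
   "Cmp C mu (TM C eta (Idm C A)) = Idm C A"
   "Cmp C mu (TM C (Idm C A) eta) = Idm C A"
   "Cmp C (TM C Delta (Idm C A)) Delta = Cmp C (TM C (Idm C A) Delta) Delta"
   "Cmp C (TM C eps (Idm C A)) Delta = Idm C A"
   "Cmp C (TM C (Idm C A) eps) Delta = Idm C A"
   "Cmp C Delta mu =
       Cmp C (TM C mu mu)
         (Cmp C (TM C (TM C (Idm C A) (Br C A A)) (Idm C A)) (TM C Delta Delta))"
   "Cmp C Delta eta = TM C eta eta"
   "Cmp C eps mu = TM C eps eps"
   "Cmp C eps eta = Idm C (Uo C)"
   "Cmp C mu (Cmp C (TM C S (Idm C A)) Delta) = Cmp C eta eps"
   "Cmp C mu (Cmp C (TM C (Idm C A) S) Delta) = Cmp C eta eps"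
  using bg unfolding braided_group_def by auto

lemma hA[simp]: "Dom C mu = TO C A A" "Cod C mu = A" "Dom C eta = Uo C" "Cod C eta = A"
  "Dom C Delta = A" "Cod C Delta = TO C A A" "Dom C eps = A" "Cod C eps = Uo C" "Dom C S = A" "Cod C S = A"
  using gh by (auto simp: hom_def)

lemma v_MuAssoc: "valid (rl RMuAssoc)" unfolding valid_def using ax(1) by (simp add: nsimps)
lemma v_UnitL: "valid (rl RUnitL)" unfolding valid_def using ax(2) by (simp add: nsimps)
lemma v_UnitR: "valid (rl RUnitR)" unfolding valid_def using ax(3) by (simp add: nsimps)
lemma v_Coassoc: "valid (rl RCoassoc)" unfolding valid_def using ax(4) by (simp add: nsimps)
lemma v_CounitL: "valid (rl RCounitL)" unfolding valid_def using ax(5) by (simp add: nsimps)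
lemma v_CounitR: "valid (rl RCounitR)" unfolding valid_def using ax(6) by (simp add: nsimps)
lemma v_Bialg: "valid (rl RBialg)"
proof -
  have e: "Cmp C Delta mu = Cmp C (Cmp C (TM C (Idm C A) mu) (TM C mu (Idm C (TO C A A))))
         (Cmp C (TM C (TM C (Idm C A) (Br C A A)) (Idm C A))
            (Cmp C (TM C (Idm C (TO C A A)) Delta) (TM C Delta (Idm C A))))"
    using ax(7) tm_split1[of mu mu] tm_split1[of Delta Delta] by simp
  show ?thesis unfolding valid_def using e by (simp add: nsimps)
qed
lemma v_DelEta: "valid (rl RDelEta)"
proof -
  have e: "Cmp C Delta eta = Cmp C (TM C (Idm C A) eta) eta"
    using ax(8) tm_split1[of eta eta] by simp
  show ?thesis unfolding valid_def using e by (simp add: nsimps)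
qed
lemma v_EpsMu: "valid (rl REpsMu)"
proof -
  have e: "Cmp C eps mu = Cmp C eps (TM C (Idm C A) eps)"
    using ax(9) tm_split2[of eps eps] by simp
  show ?thesis unfolding valid_def using e by (simp add: nsimps)
qed
lemma v_EpsEta: "valid (rl REpsEta)" unfolding valid_def using ax(10) by (simp add: nsimps)
lemma v_AntipL: "valid (rl RAntipL)" unfolding valid_def using ax(11) by (simp add: nsimps)
lemma v_AntipR: "valid (rl RAntipR)" unfolding valid_def using ax(12) by (simp add: nsimps)



lemma cmz: "z \<noteq> AA \<Longrightarrow> right_crossed_module C A mu eta Delta eps (oa z) (gm (Act z)) (gm (Coa z))"
  using cmX cmY by (cases z) auto

lemma v_z:
  "valid (rl (RActAssoc z))" "valid (rl (RActUnit z))" "valid (rl (RCoaCoassoc z))"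
  "valid (rl (RCoaCounit z))" "valid (rl (RYD z))"
proof -
  have triv: "valid ([],[],[])" unfolding valid_def by simp
  have "(valid (rl (RActAssoc z)) \<and> valid (rl (RActUnit z)) \<and> valid (rl (RCoaCoassoc z))
     \<and> valid (rl (RCoaCounit z)) \<and> valid (rl (RYD z)))"
  proof (cases "z = AA")
    case True
    then show ?thesis using triv by simp
  next
    case False
    define Z where "Z = oa z"
    define mr where "mr = gm (Act z)"
    define dr where "dr = gm (Coa z)"
    have c: "hom C mr (TO C Z A) Z \<and> hom C dr Z (TO C Z A) \<and>
     Cmp C mr (TM C mr (Idm C A)) = Cmp C mr (TM C (Idm C Z) mu) \<and>
     Cmp C mr (TM C (Idm C Z) eta) = Idm C Z \<and>
     Cmp C (TM C dr (Idm C A)) dr = Cmp C (TM C (Idm C Z) Delta) dr \<and>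
     Cmp C (TM C (Idm C Z) eps) dr = Idm C Z \<and>
     Cmp C (TM C (Idm C Z) mu)
       (Cmp C (TM C (Br C A Z) (Idm C A))
         (Cmp C (TM C (Idm C A) (Cmp C dr mr))
           (Cmp C (TM C (Br C Z A) (Idm C A)) (TM C (Idm C Z) Delta)))) =
     Cmp C (TM C mr mu)
       (Cmp C (TM C (TM C (Idm C Z) (Br C A A)) (Idm C A)) (TM C dr Delta))"
      using cmz[OF False] unfolding right_crossed_module_def Z_def mr_def dr_def by blast
    have h: "Dom C mr = TO C Z A" "Cod C mr = Z" "Dom C dr = Z" "Cod C dr = TO C Z A"
      using c unfolding hom_def by auto
    have e1: "Cmp C (TM C (Idm C Z) mu)
       (Cmp C (TM C (Br C A Z) (Idm C A))
         (Cmp C (Cmp C (TM C (Idm C A) dr) (TM C (Idm C A) mr))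
           (Cmp C (TM C (Br C Z A) (Idm C A)) (TM C (Idm C Z) Delta)))) =
     Cmp C (Cmp C (TM C (Idm C Z) mu) (TM C mr (Idm C (TO C A A))))
       (Cmp C (TM C (TM C (Idm C Z) (Br C A A)) (Idm C A))
          (Cmp C (TM C (Idm C (TO C Z A)) Delta) (TM C dr (Idm C A))))"
      using c h tm_split1[of mr mu] tm_split1[of dr Delta] tm_idl_cmp[of mr dr A] by simp
    have zz: "oa z = Z" "gm (Act z) = mr" "gm (Coa z) = dr" using Z_def mr_def dr_def by auto
    have gz: "gdom (Act z) = [z, AA]" "gcod (Act z) = [z]" "gdom (Coa z) = [z]" "gcod (Coa z) = [z, AA]"
      by auto
    have rr: "rl (RActAssoc z) = ([z,AA,AA], [([],Act z,[AA]), ([],Act z,[])], [([z],Mu,[]), ([],Act z,[])])"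
      "rl (RActUnit z) = ([z], [([z],Eta,[]), ([],Act z,[])], [])"
      "rl (RCoaCoassoc z) = ([z], [([],Coa z,[]), ([],Coa z,[AA])], [([],Coa z,[]), ([z],Dl,[])])"
      "rl (RCoaCounit z) = ([z], [([],Coa z,[]), ([z],Ep,[])], [])"
      "rl (RYD z) = ([z,AA], [([z],Dl,[]), ([],Brd z AA,[AA]), ([AA],Act z,[]), ([AA],Coa z,[]), ([],Brd AA z,[AA]), ([z],Mu,[])],
          [([],Coa z,[AA]), ([z,AA],Dl,[]), ([z],Brd AA AA,[AA]), ([],Act z,[AA,AA]), ([z],Mu,[])])"
      using False by (cases z; simp)+
    show ?thesis unfolding valid_def rr using c h e1
      by (simp add: nsimps zz)
  qed
  then show "valid (rl (RActAssoc z))" "valid (rl (RActUnit z))" "valid (rl (RCoaCoassoc z))"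
    "valid (rl (RCoaCounit z))" "valid (rl (RYD z))" by auto
qed



lemma brdR_sound: "wt (U @ [b]) (brdR U b) \<and> endw (U @ [b]) (brdR U b) = b # U
   \<and> dm (U @ [b]) (brdR U b) = Br C (ob U) (oa b)"
proof (induction U)
  case Nil
  then show ?case by (simp add: br_unit)
next
  case (Cons u U)
  let ?B = "brdR U b"
  have w1: "wt (U @ [b]) ?B" and e1: "endw (U @ [b]) ?B = b # U" and d1: "dm (U @ [b]) ?B = Br C (ob U) (oa b)"
    using Cons.IH by auto
  have ww: "wt (u # U @ [b]) (map (whisk [u] []) ?B) \<and> endw (u # U @ [b]) (map (whisk [u] []) ?B) = u # b # U"
    using wt_whisk[OF w1, of "[u]" "[]"] e1 by simp
  have dw: "dm (u # U @ [b]) (map (whisk [u] []) ?B) = TM C (Idm C (oa u)) (Br C (ob U) (oa b))"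
    using dm_whisk[OF w1, of "[u]" "[]"] d1 by simp
  have wt2: "wt (u # U @ [b]) (map (whisk [u] []) ?B @ [([], Brd u b, U)])" using ww by simp
  have "dm (u # U @ [b]) (map (whisk [u] []) ?B @ [([], Brd u b, U)])
     = Cmp C (dm (u # b # U) [([], Brd u b, U)]) (TM C (Idm C (oa u)) (Br C (ob U) (oa b)))"
    using dm_append[OF wt2] ww dw by simp
  also have "\<dots> = Cmp C (TM C (Br C (oa u) (oa b)) (Idm C (ob U))) (TM C (Idm C (oa u)) (Br C (ob U) (oa b)))"
    by (simp add: idl)
  also have "\<dots> = Br C (ob (u # U)) (oa b)" by (simp add: hex2)
  finally show ?case using ww by simp
qed

lemma brdL_sound: "wt (b # U) (brdL b U) \<and> endw (b # U) (brdL b U) = U @ [b]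
   \<and> dm (b # U) (brdL b U) = Br C (oa b) (ob U)"
proof (induction U)
  case Nil
  then show ?case by (simp add: br_unit2)
next
  case (Cons u U)
  let ?B = "brdL b U"
  have w1: "wt (b # U) ?B" and e1: "endw (b # U) ?B = U @ [b]" and d1: "dm (b # U) ?B = Br C (oa b) (ob U)"
    using Cons.IH by auto
  have ww: "wt (u # b # U) (map (whisk [u] []) ?B) \<and> endw (u # b # U) (map (whisk [u] []) ?B) = u # U @ [b]"
    using wt_whisk[OF w1, of "[u]" "[]"] e1 by simp
  have dw: "dm (u # b # U) (map (whisk [u] []) ?B) = TM C (Idm C (oa u)) (Br C (oa b) (ob U))"
    using dm_whisk[OF w1, of "[u]" "[]"] d1 by simp
  have wt2: "wt (b # u # U) ([([], Brd b u, U)] @ map (whisk [u] []) ?B)" using ww by simp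
  have "dm (b # u # U) ([([], Brd b u, U)] @ map (whisk [u] []) ?B)
     = Cmp C (TM C (Idm C (oa u)) (Br C (oa b) (ob U))) (dm (b # u # U) [([], Brd b u, U)])"
    using dm_append[OF wt2] ww dw by simp
  also have "\<dots> = Cmp C (TM C (Idm C (oa u)) (Br C (oa b) (ob U))) (TM C (Br C (oa b) (oa u)) (Idm C (ob U)))"
    by (simp add: idl)
  also have "\<dots> = Br C (oa b) (ob (u # U))" by (simp add: hex1)
  finally show ?case using ww by simp
qed

lemma v_NR: "valid (rl (RNR g b))"
proof -
  have a: "wt (gcod g @ [b]) (brdR (gcod g) b)" "endw (gcod g @ [b]) (brdR (gcod g) b) = b # gcod g"
    "dm (gcod g @ [b]) (brdR (gcod g) b) = Br C (ob (gcod g)) (oa b)"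
    using brdR_sound by auto
  have c: "wt (gdom g @ [b]) (brdR (gdom g) b)" "endw (gdom g @ [b]) (brdR (gdom g) b) = b # gdom g"
    "dm (gdom g @ [b]) (brdR (gdom g) b) = Br C (ob (gdom g)) (oa b)"
    using brdR_sound by auto
  have wr: "wt (gdom g @ [b]) (brdR (gdom g) b @ [([b],g,[])])" using c by simp
  have n: "Cmp C (Br C (ob (gcod g)) (oa b)) (TM C (gm g) (Idm C (oa b))) =
           Cmp C (TM C (Idm C (oa b)) (gm g)) (Br C (ob (gdom g)) (oa b))"
    using br_nat[of "gm g" "Idm C (oa b)"] by simp
  show ?thesis unfolding valid_def using a c wr n dm_append[OF wr] by (simp add: idl)
qed

lemma v_NL: "valid (rl (RNL g b))"
proof -
  have a: "wt (b # gcod g) (brdL b (gcod g))" "endw (b # gcod g) (brdL b (gcod g)) = gcod g @ [b]"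
    "dm (b # gcod g) (brdL b (gcod g)) = Br C (oa b) (ob (gcod g))"
    using brdL_sound by auto
  have c: "wt (b # gdom g) (brdL b (gdom g))" "endw (b # gdom g) (brdL b (gdom g)) = gdom g @ [b]"
    "dm (b # gdom g) (brdL b (gdom g)) = Br C (oa b) (ob (gdom g))"
    using brdL_sound by auto
  have wr: "wt (b # gdom g) (brdL b (gdom g) @ [([],g,[b])])" using c by simp
  have n: "Cmp C (Br C (oa b) (ob (gcod g))) (TM C (Idm C (oa b)) (gm g)) =
           Cmp C (TM C (gm g) (Idm C (oa b))) (Br C (oa b) (ob (gdom g)))"
    using br_nat[of "Idm C (oa b)" "gm g"] by simp
  show ?thesis unfolding valid_def using a c wr n dm_append[OF wr] by (simp add: idl)
qed


lemma v_F: "valid (rl RF)"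
proof -
  have "valid ([AA], [([],Sg,[]), ([AA],Eta,[])], [([],Dl,[]), ([AA],Sg,[]), ([AA],Dl,[]), ([],(Brd AA AA),[AA]), ([AA],Mu,[])])"
  proof (rule valid_by_run[where ss="[Rw RUnitR 1 0 False, Sw 2, Rw RDelEta 1 1 False, Rw RCounitR 0 0 False, Sw 1, Rw RAntipR 2 1 False, Rw RBialg 4 1 True, Sw 7, Rw RMuAssoc 8 0 False, Sw 1, Sw 2, Sw 3, Sw 4, Sw 5, Sw 6, Rw RCoassoc 0 0 False, Sw 2, Rw RCoassoc 1 0 False, Sw 6, Sw 5, Sw 4, Sw 3, Sw 7, Sw 6, Sw 5, Sw 4, Rw RAntipL 2 0 True, Rw RCounitL 1 0 True, Sw 1, Sw 2, Sw 3, Sw 4, Rw RUnitL 5 0 True]"])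
    show "wt [AA] [([],Sg,[]), ([AA],Eta,[])]" by simp
    show "run [AA] [Rw RUnitR 1 0 False, Sw 2, Rw RDelEta 1 1 False, Rw RCounitR 0 0 False, Sw 1, Rw RAntipR 2 1 False, Rw RBialg 4 1 True, Sw 7, Rw RMuAssoc 8 0 False, Sw 1, Sw 2, Sw 3, Sw 4, Sw 5, Sw 6, Rw RCoassoc 0 0 False, Sw 2, Rw RCoassoc 1 0 False, Sw 6, Sw 5, Sw 4, Sw 3, Sw 7, Sw 6, Sw 5, Sw 4, Rw RAntipL 2 0 True, Rw RCounitL 1 0 True, Sw 1, Sw 2, Sw 3, Sw 4, Rw RUnitL 5 0 True] [([],Sg,[]), ([AA],Eta,[])] = Some [([],Dl,[]), ([AA],Sg,[]), ([AA],Dl,[]), ([],(Brd AA AA),[AA]), ([AA],Mu,[])]" by (simp add: Let_def)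
    show "\<forall>n\<in>set (concat (map sname [Rw RUnitR 1 0 False, Sw 2, Rw RDelEta 1 1 False, Rw RCounitR 0 0 False, Sw 1, Rw RAntipR 2 1 False, Rw RBialg 4 1 True, Sw 7, Rw RMuAssoc 8 0 False, Sw 1, Sw 2, Sw 3, Sw 4, Sw 5, Sw 6, Rw RCoassoc 0 0 False, Sw 2, Rw RCoassoc 1 0 False, Sw 6, Sw 5, Sw 4, Sw 3, Sw 7, Sw 6, Sw 5, Sw 4, Rw RAntipL 2 0 True, Rw RCounitL 1 0 True, Sw 1, Sw 2, Sw 3, Sw 4, Rw RUnitL 5 0 True])). valid (rl n)"
      by (simp del: rl.simps add: v_MuAssoc v_UnitL v_UnitR v_Coassoc v_CounitL v_CounitR v_Bialg v_DelEta v_EpsMu v_EpsEta v_AntipL v_AntipR v_z v_NR v_NL)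
  qed
  then show ?thesis by (simp add: valid_sym)
qed

lemma v_cuAAR: "valid (rl RcuAAR)"
proof -
  have "valid ([AA,AA], [([],Dl,[AA]), ([AA,AA],Dl,[]), ([AA],(Brd AA AA),[AA]), ([AA,AA,AA],Ep,[]), ([AA,AA],Ep,[])], [])"
  proof (rule valid_by_run[where ss="[Sw 2, Rw RCounitR 1 2 True, Rw (RNR Ep AA) 1 1 False, Rw RCounitR 0 0 True]"])
    show "wt [AA,AA] [([],Dl,[AA]), ([AA,AA],Dl,[]), ([AA],(Brd AA AA),[AA]), ([AA,AA,AA],Ep,[]), ([AA,AA],Ep,[])]" by simp
    show "run [AA,AA] [Sw 2, Rw RCounitR 1 2 True, Rw (RNR Ep AA) 1 1 False, Rw RCounitR 0 0 True] [([],Dl,[AA]), ([AA,AA],Dl,[]), ([AA],(Brd AA AA),[AA]), ([AA,AA,AA],Ep,[]), ([AA,AA],Ep,[])] = Some []" by (simp add: Let_def)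
    show "\<forall>n\<in>set (concat (map sname [Sw 2, Rw RCounitR 1 2 True, Rw (RNR Ep AA) 1 1 False, Rw RCounitR 0 0 True])). valid (rl n)"
      by (simp del: rl.simps add: v_MuAssoc v_UnitL v_UnitR v_Coassoc v_CounitL v_CounitR v_Bialg v_DelEta v_EpsMu v_EpsEta v_AntipL v_AntipR v_z v_NR v_NL v_F)
  qed
  then show ?thesis by (simp add: valid_sym)
qed

lemma v_cuAAL: "valid (rl RcuAAL)"
proof -
  have "valid ([AA,AA], [([],Dl,[AA]), ([AA,AA],Dl,[]), ([AA],(Brd AA AA),[AA]), ([AA],Ep,[AA,AA]), ([],Ep,[AA,AA])], [])"
  proof (rule valid_by_run[where ss="[Rw (RNL Ep AA) 2 1 False, Rw RCounitL 1 2 True, Rw RCounitL 0 0 True]"])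
    show "wt [AA,AA] [([],Dl,[AA]), ([AA,AA],Dl,[]), ([AA],(Brd AA AA),[AA]), ([AA],Ep,[AA,AA]), ([],Ep,[AA,AA])]" by simp
    show "run [AA,AA] [Rw (RNL Ep AA) 2 1 False, Rw RCounitL 1 2 True, Rw RCounitL 0 0 True] [([],Dl,[AA]), ([AA,AA],Dl,[]), ([AA],(Brd AA AA),[AA]), ([AA],Ep,[AA,AA]), ([],Ep,[AA,AA])] = Some []" by (simp add: Let_def)
    show "\<forall>n\<in>set (concat (map sname [Rw (RNL Ep AA) 2 1 False, Rw RCounitL 1 2 True, Rw RCounitL 0 0 True])). valid (rl n)"
      by (simp del: rl.simps add: v_MuAssoc v_UnitL v_UnitR v_Coassoc v_CounitL v_CounitR v_Bialg v_DelEta v_EpsMu v_EpsEta v_AntipL v_AntipR v_z v_NR v_NL v_F v_cuAAR)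
  qed
  then show ?thesis by (simp add: valid_sym)
qed

lemma v_coAA: "valid (rl RcoAA)"
proof -
  have "valid ([AA,AA], [([],Dl,[AA]), ([AA,AA],Dl,[]), ([AA],(Brd AA AA),[AA]), ([],Dl,[AA,AA,AA]), ([AA,AA],Dl,[AA,AA]), ([AA],(Brd AA AA),[AA,AA,AA])], [([],Dl,[AA]), ([AA,AA],Dl,[]), ([AA],(Brd AA AA),[AA]), ([AA,AA],Dl,[AA]), ([AA,AA,AA,AA],Dl,[]), ([AA,AA,AA],(Brd AA AA),[AA])])"
  proof (rule valid_by_run[where ss="[Sw 2, Sw 1, Rw (RNL Dl AA) 3 2 False, Sw 5, Rw RCoassoc 0 0 True, Rw RCoassoc 2 3 True, Sw 1, Sw 3, Sw 4, Rw (RNR Dl AA) 2 1 True]"])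
    show "wt [AA,AA] [([],Dl,[AA]), ([AA,AA],Dl,[]), ([AA],(Brd AA AA),[AA]), ([],Dl,[AA,AA,AA]), ([AA,AA],Dl,[AA,AA]), ([AA],(Brd AA AA),[AA,AA,AA])]" by simp
    show "run [AA,AA] [Sw 2, Sw 1, Rw (RNL Dl AA) 3 2 False, Sw 5, Rw RCoassoc 0 0 True, Rw RCoassoc 2 3 True, Sw 1, Sw 3, Sw 4, Rw (RNR Dl AA) 2 1 True] [([],Dl,[AA]), ([AA,AA],Dl,[]), ([AA],(Brd AA AA),[AA]), ([],Dl,[AA,AA,AA]), ([AA,AA],Dl,[AA,AA]), ([AA],(Brd AA AA),[AA,AA,AA])] = Some [([],Dl,[AA]), ([AA,AA],Dl,[]), ([AA],(Brd AA AA),[AA]), ([AA,AA],Dl,[AA]), ([AA,AA,AA,AA],Dl,[]), ([AA,AA,AA],(Brd AA AA),[AA])]" by (simp add: Let_def)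
    show "\<forall>n\<in>set (concat (map sname [Sw 2, Sw 1, Rw (RNL Dl AA) 3 2 False, Sw 5, Rw RCoassoc 0 0 True, Rw RCoassoc 2 3 True, Sw 1, Sw 3, Sw 4, Rw (RNR Dl AA) 2 1 True])). valid (rl n)"
      by (simp del: rl.simps add: v_MuAssoc v_UnitL v_UnitR v_Coassoc v_CounitL v_CounitR v_Bialg v_DelEta v_EpsMu v_EpsEta v_AntipL v_AntipR v_z v_NR v_NL v_F v_cuAAR v_cuAAL)
  qed
  then show ?thesis by (simp add: valid_sym)
qed

lemma v_P1: "valid (rl RP1)"
proof -
  have "valid ([AA,AA], [([],Dl,[AA]), ([AA,AA],Dl,[]), ([AA],(Brd AA AA),[AA]), ([],Mu,[AA,AA]), ([AA],(Brd AA AA),[]), ([AA],Sg,[AA]), ([AA,AA],Sg,[]), ([AA],Mu,[]), ([],Mu,[])], [([AA],Ep,[]), ([],Ep,[]), ([],Eta,[])])"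
  proof (rule valid_by_run[where ss="[Sw 3, Rw (RNL Dl AA) 1 1 True, Rw RMuAssoc 6 0 False, Sw 3, Sw 4, Rw RMuAssoc 5 0 True, Sw 3, Sw 2, Rw RAntipR 3 1 True, Rw RUnitR 4 0 True, Sw 2, Rw (RNL Ep AA) 1 1 False, Sw 0, Rw RAntipR 1 0 True]"])
    show "wt [AA,AA] [([],Dl,[AA]), ([AA,AA],Dl,[]), ([AA],(Brd AA AA),[AA]), ([],Mu,[AA,AA]), ([AA],(Brd AA AA),[]), ([AA],Sg,[AA]), ([AA,AA],Sg,[]), ([AA],Mu,[]), ([],Mu,[])]" by simp
    show "run [AA,AA] [Sw 3, Rw (RNL Dl AA) 1 1 True, Rw RMuAssoc 6 0 False, Sw 3, Sw 4, Rw RMuAssoc 5 0 True, Sw 3, Sw 2, Rw RAntipR 3 1 True, Rw RUnitR 4 0 True, Sw 2, Rw (RNL Ep AA) 1 1 False, Sw 0, Rw RAntipR 1 0 True] [([],Dl,[AA]), ([AA,AA],Dl,[]), ([AA],(Brd AA AA),[AA]), ([],Mu,[AA,AA]), ([AA],(Brd AA AA),[]), ([AA],Sg,[AA]), ([AA,AA],Sg,[]), ([AA],Mu,[]), ([],Mu,[])] = Some [([AA],Ep,[]), ([],Ep,[]), ([],Eta,[])]" by (simp add: Let_def)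
    show "\<forall>n\<in>set (concat (map sname [Sw 3, Rw (RNL Dl AA) 1 1 True, Rw RMuAssoc 6 0 False, Sw 3, Sw 4, Rw RMuAssoc 5 0 True, Sw 3, Sw 2, Rw RAntipR 3 1 True, Rw RUnitR 4 0 True, Sw 2, Rw (RNL Ep AA) 1 1 False, Sw 0, Rw RAntipR 1 0 True])). valid (rl n)"
      by (simp del: rl.simps add: v_MuAssoc v_UnitL v_UnitR v_Coassoc v_CounitL v_CounitR v_Bialg v_DelEta v_EpsMu v_EpsEta v_AntipL v_AntipR v_z v_NR v_NL v_F v_cuAAR v_cuAAL v_coAA)
  qed
  then show ?thesis by (simp add: valid_sym)
qed

lemma v_P2: "valid (rl RP2)"
proof -
  have "valid ([AA,AA], [([],Dl,[AA]), ([AA,AA],Dl,[]), ([AA],(Brd AA AA),[AA]), ([],Mu,[AA,AA]), ([],Sg,[AA,AA]), ([AA],Mu,[]), ([],Mu,[])], [([AA],Ep,[]), ([],Ep,[]), ([],Eta,[])])"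
  proof (rule valid_by_run[where ss="[Sw 4, Rw RBialg 0 0 False, Rw RAntipL 1 0 True, Rw REpsMu 0 0 True]"])
    show "wt [AA,AA] [([],Dl,[AA]), ([AA,AA],Dl,[]), ([AA],(Brd AA AA),[AA]), ([],Mu,[AA,AA]), ([],Sg,[AA,AA]), ([AA],Mu,[]), ([],Mu,[])]" by simp
    show "run [AA,AA] [Sw 4, Rw RBialg 0 0 False, Rw RAntipL 1 0 True, Rw REpsMu 0 0 True] [([],Dl,[AA]), ([AA,AA],Dl,[]), ([AA],(Brd AA AA),[AA]), ([],Mu,[AA,AA]), ([],Sg,[AA,AA]), ([AA],Mu,[]), ([],Mu,[])] = Some [([AA],Ep,[]), ([],Ep,[]), ([],Eta,[])]" by (simp add: Let_def)
    show "\<forall>n\<in>set (concat (map sname [Sw 4, Rw RBialg 0 0 False, Rw RAntipL 1 0 True, Rw REpsMu 0 0 True])). valid (rl n)"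
      by (simp del: rl.simps add: v_MuAssoc v_UnitL v_UnitR v_Coassoc v_CounitL v_CounitR v_Bialg v_DelEta v_EpsMu v_EpsEta v_AntipL v_AntipR v_z v_NR v_NL v_F v_cuAAR v_cuAAL v_coAA v_P1)
  qed
  then show ?thesis by (simp add: valid_sym)
qed

lemma v_H1: "valid (rl RH1)"
proof -
  have "valid ([AA,AA], [([],Mu,[]), ([],Sg,[])], [([],(Brd AA AA),[]), ([],Sg,[AA]), ([AA],Sg,[]), ([],Mu,[])])"
  proof (rule valid_by_run[where ss="[Rw RcuAAR 0 0 False, Rw RUnitR 7 0 False, Sw 3, Sw 4, Sw 5, Sw 3, Sw 4, Sw 5, Rw RP1 5 1 False, Rw RMuAssoc 13 0 False, Sw 4, Sw 5, Sw 6, Sw 3, Sw 4, Sw 5, Rw RcoAA 0 0 False, Sw 12, Sw 11, Sw 10, Sw 9, Rw RP2 3 0 True, Rw RcuAAL 0 0 True, Sw 0, Sw 1, Sw 2, Sw 3, Rw RUnitL 4 0 True]"])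
    show "wt [AA,AA] [([],Mu,[]), ([],Sg,[])]" by simp
    show "run [AA,AA] [Rw RcuAAR 0 0 False, Rw RUnitR 7 0 False, Sw 3, Sw 4, Sw 5, Sw 3, Sw 4, Sw 5, Rw RP1 5 1 False, Rw RMuAssoc 13 0 False, Sw 4, Sw 5, Sw 6, Sw 3, Sw 4, Sw 5, Rw RcoAA 0 0 False, Sw 12, Sw 11, Sw 10, Sw 9, Rw RP2 3 0 True, Rw RcuAAL 0 0 True, Sw 0, Sw 1, Sw 2, Sw 3, Rw RUnitL 4 0 True] [([],Mu,[]), ([],Sg,[])] = Some [([],(Brd AA AA),[]), ([],Sg,[AA]), ([AA],Sg,[]), ([],Mu,[])]" by (simp add: Let_def)
    show "\<forall>n\<in>set (concat (map sname [Rw RcuAAR 0 0 False, Rw RUnitR 7 0 False, Sw 3, Sw 4, Sw 5, Sw 3, Sw 4, Sw 5, Rw RP1 5 1 False, Rw RMuAssoc 13 0 False, Sw 4, Sw 5, Sw 6, Sw 3, Sw 4, Sw 5, Rw RcoAA 0 0 False, Sw 12, Sw 11, Sw 10, Sw 9, Rw RP2 3 0 True, Rw RcuAAL 0 0 True, Sw 0, Sw 1, Sw 2, Sw 3, Rw RUnitL 4 0 True])). valid (rl n)"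
      by (simp del: rl.simps add: v_MuAssoc v_UnitL v_UnitR v_Coassoc v_CounitL v_CounitR v_Bialg v_DelEta v_EpsMu v_EpsEta v_AntipL v_AntipR v_z v_NR v_NL v_F v_cuAAR v_cuAAL v_coAA v_P1 v_P2)
  qed
  then show ?thesis by (simp add: valid_sym)
qed

lemma v_M: "valid (rl RM)"
proof -
  have "valid ([AY,AX,AA,AA], [([AY,AX],Mu,[]), ([AY,AX],Dl,[]), ([AY],(Brd AX AA),[AA]), ([],(Act AY),[AX,AA]), ([AY],(Act AX),[])], [([AY,AX],Dl,[AA]), ([AY],(Brd AX AA),[AA,AA]), ([],(Act AY),[AX,AA,AA]), ([AY],(Act AX),[AA]), ([AY,AX],Dl,[]), ([AY],(Brd AX AA),[AA]), ([],(Act AY),[AX,AA]), ([AY],(Act AX),[])])"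
  proof (rule valid_by_run[where ss="[Rw RBialg 0 2 True, Sw 4, Rw (RNL Mu AX) 3 1 True, Sw 6, Rw (RActAssoc AY) 5 0 False, Rw (RActAssoc AX) 7 1 False, Sw 6, Sw 4, Sw 2, Sw 3, Sw 1, Sw 2, Rw (RNR (Act AX) AA) 4 1 False, Sw 3]"])
    show "wt [AY,AX,AA,AA] [([AY,AX],Mu,[]), ([AY,AX],Dl,[]), ([AY],(Brd AX AA),[AA]), ([],(Act AY),[AX,AA]), ([AY],(Act AX),[])]" by simp
    show "run [AY,AX,AA,AA] [Rw RBialg 0 2 True, Sw 4, Rw (RNL Mu AX) 3 1 True, Sw 6, Rw (RActAssoc AY) 5 0 False, Rw (RActAssoc AX) 7 1 False, Sw 6, Sw 4, Sw 2, Sw 3, Sw 1, Sw 2, Rw (RNR (Act AX) AA) 4 1 False, Sw 3] [([AY,AX],Mu,[]), ([AY,AX],Dl,[]), ([AY],(Brd AX AA),[AA]), ([],(Act AY),[AX,AA]), ([AY],(Act AX),[])] = Some [([AY,AX],Dl,[AA]), ([AY],(Brd AX AA),[AA,AA]), ([],(Act AY),[AX,AA,AA]), ([AY],(Act AX),[AA]), ([AY,AX],Dl,[]), ([AY],(Brd AX AA),[AA]), ([],(Act AY),[AX,AA]), ([AY],(Act AX),[])]" by (simp add: Let_def)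
    show "\<forall>n\<in>set (concat (map sname [Rw RBialg 0 2 True, Sw 4, Rw (RNL Mu AX) 3 1 True, Sw 6, Rw (RActAssoc AY) 5 0 False, Rw (RActAssoc AX) 7 1 False, Sw 6, Sw 4, Sw 2, Sw 3, Sw 1, Sw 2, Rw (RNR (Act AX) AA) 4 1 False, Sw 3])). valid (rl n)"
      by (simp del: rl.simps add: v_MuAssoc v_UnitL v_UnitR v_Coassoc v_CounitL v_CounitR v_Bialg v_DelEta v_EpsMu v_EpsEta v_AntipL v_AntipR v_z v_NR v_NL v_F v_cuAAR v_cuAAL v_coAA v_P1 v_P2 v_H1)
  qed
  then show ?thesis by (simp add: valid_sym)
qed

lemma v_L3: "valid (rl RL3)"
proof -
  have "valid ([AY,AX], [([AY],(Coa AX),[]), ([AY,AX],Sg,[]), ([AY,AX],Dl,[]), ([AY],(Brd AX AA),[AA]), ([],(Act AY),[AX,AA]), ([AY],(Act AX),[]), ([AY],(Coa AX),[]), ([],(Brd AY AX),[AA]), ([AX],(Act AY),[])], [([AY],(Coa AX),[]), ([AY,AX],Sg,[]), ([AY],(Act AX),[]), ([],(Brd AY AX),[])])"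
  proof (rule valid_by_run[where ss="[Sw 4, Sw 5, Rw (RNR (Act AY) AX) 6 0 True, Rw (RActAssoc AY) 8 1 True, Sw 7, Rw (RYD AX) 2 1 True, Sw 1, Rw (RCoaCoassoc AX) 0 1 True, Sw 5, Rw RF 1 2 True, Sw 2, Sw 3, Rw (RActUnit AY) 4 1 True]"])
    show "wt [AY,AX] [([AY],(Coa AX),[]), ([AY,AX],Sg,[]), ([AY,AX],Dl,[]), ([AY],(Brd AX AA),[AA]), ([],(Act AY),[AX,AA]), ([AY],(Act AX),[]), ([AY],(Coa AX),[]), ([],(Brd AY AX),[AA]), ([AX],(Act AY),[])]" by simp
    show "run [AY,AX] [Sw 4, Sw 5, Rw (RNR (Act AY) AX) 6 0 True, Rw (RActAssoc AY) 8 1 True, Sw 7, Rw (RYD AX) 2 1 True, Sw 1, Rw (RCoaCoassoc AX) 0 1 True, Sw 5, Rw RF 1 2 True, Sw 2, Sw 3, Rw (RActUnit AY) 4 1 True] [([AY],(Coa AX),[]), ([AY,AX],Sg,[]), ([AY,AX],Dl,[]), ([AY],(Brd AX AA),[AA]), ([],(Act AY),[AX,AA]), ([AY],(Act AX),[]), ([AY],(Coa AX),[]), ([],(Brd AY AX),[AA]), ([AX],(Act AY),[])] = Some [([AY],(Coa AX),[]), ([AY,AX],Sg,[]), ([AY],(Act AX),[]), ([],(Brd AY AX),[])]" by (simp add: Let_def)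
    show "\<forall>n\<in>set (concat (map sname [Sw 4, Sw 5, Rw (RNR (Act AY) AX) 6 0 True, Rw (RActAssoc AY) 8 1 True, Sw 7, Rw (RYD AX) 2 1 True, Sw 1, Rw (RCoaCoassoc AX) 0 1 True, Sw 5, Rw RF 1 2 True, Sw 2, Sw 3, Rw (RActUnit AY) 4 1 True])). valid (rl n)"
      by (simp del: rl.simps add: v_MuAssoc v_UnitL v_UnitR v_Coassoc v_CounitL v_CounitR v_Bialg v_DelEta v_EpsMu v_EpsEta v_AntipL v_AntipR v_z v_NR v_NL v_F v_cuAAR v_cuAAL v_coAA v_P1 v_P2 v_H1 v_M)
  qed
  then show ?thesis by (simp add: valid_sym)
qed

lemma v_L4: "valid (rl RL4)"
proof -
  have "valid ([AX,AY], [([AX],(Coa AY),[]), ([],(Brd AX AY),[AA]), ([AY],(Act AX),[]), ([],(Coa AY),[AX]), ([AY,AA],(Coa AX),[]), ([AY],(Brd AA AX),[AA]), ([AY,AX],Mu,[]), ([AY,AX],Sg,[]), ([AY,AX],Dl,[]), ([AY],(Brd AX AA),[AA]), ([],(Act AY),[AX,AA]), ([AY],(Act AX),[])], [([],(Brd AX AY),[]), ([],(Coa AY),[AX]), ([AY],Sg,[AX]), ([],(Act AY),[AX]), ([AY],(Coa AX),[]), ([AY,AX],Sg,[]), ([AY,AX],Dl,[]), ([AY],(Brd AX AA),[AA]), ([],(Act AY),[AX,AA]), ([AY],(Act AX),[])])"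
  proof (rule valid_by_run[where ss="[Sw 2, Rw (RNL (Coa AY) AX) 1 0 False, Rw (RCoaCoassoc AY) 0 1 True, Sw 1, Rw (RYD AX) 2 1 True, Rw RH1 6 2 True, Rw RM 9 0 True, Sw 5, Rw (RNL Dl AA) 3 2 True, Sw 5, Sw 6, Sw 7, Rw (RNR (Act AX) AA) 8 1 True, Sw 10, Rw (RActAssoc AX) 11 1 True, Sw 10, Sw 9, Sw 5, Sw 4, Rw RF 5 2 True, Sw 6, Sw 7, Rw (RActUnit AX) 8 1 True, Sw 4, Sw 5, Rw (RNL Sg AX) 4 1 True, Rw (RNR (Coa AX) AA) 2 1 True, Rw (RNL (Coa AY) AX) 0 0 True, Sw 2, Sw 4, Sw 3]"])
    show "wt [AX,AY] [([AX],(Coa AY),[]), ([],(Brd AX AY),[AA]), ([AY],(Act AX),[]), ([],(Coa AY),[AX]), ([AY,AA],(Coa AX),[]), ([AY],(Brd AA AX),[AA]), ([AY,AX],Mu,[]), ([AY,AX],Sg,[]), ([AY,AX],Dl,[]), ([AY],(Brd AX AA),[AA]), ([],(Act AY),[AX,AA]), ([AY],(Act AX),[])]" by simp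
    show "run [AX,AY] [Sw 2, Rw (RNL (Coa AY) AX) 1 0 False, Rw (RCoaCoassoc AY) 0 1 True, Sw 1, Rw (RYD AX) 2 1 True, Rw RH1 6 2 True, Rw RM 9 0 True, Sw 5, Rw (RNL Dl AA) 3 2 True, Sw 5, Sw 6, Sw 7, Rw (RNR (Act AX) AA) 8 1 True, Sw 10, Rw (RActAssoc AX) 11 1 True, Sw 10, Sw 9, Sw 5, Sw 4, Rw RF 5 2 True, Sw 6, Sw 7, Rw (RActUnit AX) 8 1 True, Sw 4, Sw 5, Rw (RNL Sg AX) 4 1 True, Rw (RNR (Coa AX) AA) 2 1 True, Rw (RNL (Coa AY) AX) 0 0 True, Sw 2, Sw 4, Sw 3] [([AX],(Coa AY),[]), ([],(Brd AX AY),[AA]), ([AY],(Act AX),[]), ([],(Coa AY),[AX]), ([AY,AA],(Coa AX),[]), ([AY],(Brd AA AX),[AA]), ([AY,AX],Mu,[]), ([AY,AX],Sg,[]), ([AY,AX],Dl,[]), ([AY],(Brd AX AA),[AA]), ([],(Act AY),[AX,AA]), ([AY],(Act AX),[])] = Some [([],(Brd AX AY),[]), ([],(Coa AY),[AX]), ([AY],Sg,[AX]), ([],(Act AY),[AX]), ([AY],(Coa AX),[]), ([AY,AX],Sg,[]), ([AY,AX],Dl,[]), ([AY],(Brd AX AA),[AA]), ([],(Act AY),[AX,AA]), ([AY],(Act AX),[])]" by (simp add: Let_def)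
    show "\<forall>n\<in>set (concat (map sname [Sw 2, Rw (RNL (Coa AY) AX) 1 0 False, Rw (RCoaCoassoc AY) 0 1 True, Sw 1, Rw (RYD AX) 2 1 True, Rw RH1 6 2 True, Rw RM 9 0 True, Sw 5, Rw (RNL Dl AA) 3 2 True, Sw 5, Sw 6, Sw 7, Rw (RNR (Act AX) AA) 8 1 True, Sw 10, Rw (RActAssoc AX) 11 1 True, Sw 10, Sw 9, Sw 5, Sw 4, Rw RF 5 2 True, Sw 6, Sw 7, Rw (RActUnit AX) 8 1 True, Sw 4, Sw 5, Rw (RNL Sg AX) 4 1 True, Rw (RNR (Coa AX) AA) 2 1 True, Rw (RNL (Coa AY) AX) 0 0 True, Sw 2, Sw 4, Sw 3])). valid (rl n)"
      by (simp del: rl.simps add: v_MuAssoc v_UnitL v_UnitR v_Coassoc v_CounitL v_CounitR v_Bialg v_DelEta v_EpsMu v_EpsEta v_AntipL v_AntipR v_z v_NR v_NL v_F v_cuAAR v_cuAAL v_coAA v_P1 v_P2 v_H1 v_M v_L3)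
  qed
  then show ?thesis by (simp add: valid_sym)
qed


lemma hXY[simp]: "Dom C mrX = TO C X A" "Cod C mrX = X" "Dom C drX = X" "Cod C drX = TO C X A"
  "Dom C mrY = TO C Y A" "Cod C mrY = Y" "Dom C drY = Y" "Cod C drY = TO C Y A"
  using gh by (auto simp: hom_def)

lemma tm_idr_cmp: "Cod C f = Dom C g \<Longrightarrow> TM C (Cmp C g f) (Idm C Z) = Cmp C (TM C g (Idm C Z)) (TM C f (Idm C Z))"
  using tm_cmp[of f g "Idm C Z" "Idm C Z"] by (simp add: idl)


lemma main_dm: "dm [AX,AY] [([AX],(Coa AY),[]), ([],(Brd AX AY),[AA]), ([AY],(Act AX),[]), ([],(Coa AY),[AX]), ([AY,AA],(Coa AX),[]), ([AY],(Brd AA AX),[AA]), ([AY,AX],Mu,[]), ([AY,AX],Sg,[]), ([AY,AX],Dl,[]), ([AY],(Brd AX AA),[AA]), ([],(Act AY),[AX,AA]), ([AY],(Act AX),[]), ([AY],(Coa AX),[]), ([],(Brd AY AX),[AA]), ([AX],(Act AY),[])] = dm [AX,AY] [([],(Brd AX AY),[]), ([],(Coa AY),[AX]), ([AY],Sg,[AX]), ([],(Act AY),[AX]), ([AY],(Coa AX),[]), ([AY,AX],Sg,[]), ([AY],(Act AX),[]), ([],(Brd AY AX),[])]"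
proof -
  have "valid ([AX,AY], [([AX],(Coa AY),[]), ([],(Brd AX AY),[AA]), ([AY],(Act AX),[]), ([],(Coa AY),[AX]), ([AY,AA],(Coa AX),[]), ([AY],(Brd AA AX),[AA]), ([AY,AX],Mu,[]), ([AY,AX],Sg,[]), ([AY,AX],Dl,[]), ([AY],(Brd AX AA),[AA]), ([],(Act AY),[AX,AA]), ([AY],(Act AX),[]), ([AY],(Coa AX),[]), ([],(Brd AY AX),[AA]), ([AX],(Act AY),[])], [([],(Brd AX AY),[]), ([],(Coa AY),[AX]), ([AY],Sg,[AX]), ([],(Act AY),[AX]), ([AY],(Coa AX),[]), ([AY,AX],Sg,[]), ([AY],(Act AX),[]), ([],(Brd AY AX),[])])"
  proof (rule valid_by_run[where ss="[Rw RL4 0 0 True, Rw RL3 4 0 True]"])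
    show "wt [AX,AY] [([AX],(Coa AY),[]), ([],(Brd AX AY),[AA]), ([AY],(Act AX),[]), ([],(Coa AY),[AX]), ([AY,AA],(Coa AX),[]), ([AY],(Brd AA AX),[AA]), ([AY,AX],Mu,[]), ([AY,AX],Sg,[]), ([AY,AX],Dl,[]), ([AY],(Brd AX AA),[AA]), ([],(Act AY),[AX,AA]), ([AY],(Act AX),[]), ([AY],(Coa AX),[]), ([],(Brd AY AX),[AA]), ([AX],(Act AY),[])]" by simp
    show "run [AX,AY] [Rw RL4 0 0 True, Rw RL3 4 0 True] [([AX],(Coa AY),[]), ([],(Brd AX AY),[AA]), ([AY],(Act AX),[]), ([],(Coa AY),[AX]), ([AY,AA],(Coa AX),[]), ([AY],(Brd AA AX),[AA]), ([AY,AX],Mu,[]), ([AY,AX],Sg,[]), ([AY,AX],Dl,[]), ([AY],(Brd AX AA),[AA]), ([],(Act AY),[AX,AA]), ([AY],(Act AX),[]), ([AY],(Coa AX),[]), ([],(Brd AY AX),[AA]), ([AX],(Act AY),[])] = Some [([],(Brd AX AY),[]), ([],(Coa AY),[AX]), ([AY],Sg,[AX]), ([],(Act AY),[AX]), ([AY],(Coa AX),[]), ([AY,AX],Sg,[]), ([AY],(Act AX),[]), ([],(Brd AY AX),[])]" by (simp add: Let_def)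
    show "\<forall>n\<in>set (concat (map sname [Rw RL4 0 0 True, Rw RL3 4 0 True])). valid (rl n)"
      by (simp del: rl.simps add: v_L3 v_L4)
  qed
  then show ?thesis unfolding valid_def by simp
qed


lemma main_L: "Cmp C (yd_braid C A Y mrY X drX)
           (Cmp C (sigma_map C S (TO C Y X)
                     (tensor_action C A Delta Y mrY X mrX)
                     (tensor_coaction C A mu Y drY X drX))
             (yd_braid C A X mrX Y drY)) = dm [AX,AY] [([AX],(Coa AY),[]), ([],(Brd AX AY),[AA]), ([AY],(Act AX),[]), ([],(Coa AY),[AX]), ([AY,AA],(Coa AX),[]), ([AY],(Brd AA AX),[AA]), ([AY,AX],Mu,[]), ([AY,AX],Sg,[]), ([AY,AX],Dl,[]), ([AY],(Brd AX AA),[AA]), ([],(Act AY),[AX,AA]), ([AY],(Act AX),[]), ([AY],(Coa AX),[]), ([],(Brd AY AX),[AA]), ([AX],(Act AY),[])]"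
    unfolding yd_braid_def sigma_map_def tensor_action_def tensor_coaction_def
    apply (simp only: tm_split1[of mrY mrX] tm_split1[of drY drX])
    apply (simp add: nsimps)
    done

lemma main_R: "Cmp C (Br C Y X)
           (Cmp C (TM C (sigma_map C S Y mrY drY) (sigma_map C S X mrX drX))
             (Br C X Y)) = dm [AX,AY] [([],(Brd AX AY),[]), ([],(Coa AY),[AX]), ([AY],Sg,[AX]), ([],(Act AY),[AX]), ([AY],(Coa AX),[]), ([AY,AX],Sg,[]), ([AY],(Act AX),[]), ([],(Brd AY AX),[])]"
proof -
  have e: "TM C (sigma_map C S Y mrY drY) (sigma_map C S X mrX drX) =
     Cmp C (TM C (Idm C Y) (sigma_map C S X mrX drX)) (TM C (sigma_map C S Y mrY drY) (Idm C X))"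
    using tm_split1[of "sigma_map C S Y mrY drY" "sigma_map C S X mrX drX"] by (simp add: sigma_map_def)
  show ?thesis unfolding e unfolding sigma_map_def
    by (simp add: nsimps tm_idl_cmp tm_idr_cmp)
qed

lemma main_loc:
  "Cmp C (yd_braid C A Y mrY X drX)
           (Cmp C (sigma_map C S (TO C Y X)
                     (tensor_action C A Delta Y mrY X mrX)
                     (tensor_coaction C A mu Y drY X drX))
             (yd_braid C A X mrX Y drY)) =
         Cmp C (Br C Y X)
           (Cmp C (TM C (sigma_map C S Y mrY drY) (sigma_map C S X mrX drX))
             (Br C X Y))"
  unfolding main_L main_R by (rule main_dm)

end

theorem mainTheorem9:
  fixes C :: "('o, 'm) bmc"
    and A X Y :: 'o
    and mu eta Delta eps S mrX drX mrY drY :: 'm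
  assumes "braided_group C A mu eta Delta eps S"
    and "right_crossed_module C A mu eta Delta eps X mrX drX"
    and "right_crossed_module C A mu eta Delta eps Y mrY drY"
  shows "Cmp C (yd_braid C A Y mrY X drX)
           (Cmp C (sigma_map C S (TO C Y X)
                     (tensor_action C A Delta Y mrY X mrX)
                     (tensor_coaction C A mu Y drY X drX))
             (yd_braid C A X mrX Y drY)) =
         Cmp C (Br C Y X)
           (Cmp C (TM C (sigma_map C S Y mrY drY) (sigma_map C S X mrX drX))
             (Br C X Y))"
proof -
  interpret hs C A X Y mu eta Delta eps S mrX drX mrY drY
    by (unfold_locales) (fact assms)+
  show ?thesis by (rule main_loc)
qed


end
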